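(* Consider the two-agent technology adoption game. There exists $\varepsilon_0>0$ such that for every $\varepsilon\in(0,\varepsilon_0)$ there is a nonempty open interval $J\subset(0,1)$ of costs such that for every $c\in J$: with the single seed 1 there is an equilibrium in which the probability that both agents adopt is strictly greater than the probability that both adopt in every equilibrium with two seeds.
   Context: Fix $\rho\in(0,1)$, $\varepsilon\in(0,1)$, two agents $1,2$ linked to each other, state $\theta\in\{g,b\}$ with $\Pr(\theta=g)=\rho$; in state $b$ no messages are sent. Every transmission is lost independently with probability $\varepsilon$. Single seed: in state $g$ the planner sends to 1, who, if she receives it, forwards it to 2; each agent observes only whether she received a message. Two seeds: in state $g$ the planner sends to both 1 and 2; an agent who receives the planner's message forwards it to the other agent; an agent does not forward a message she received only from the other agent; each agent observes which of the two sources (planner, other agent) delivered a message to her. Technology adoption game with cost $c\in(0,1)$: each agent chooses $a_i\in\{0,1\}$ (possibly mixed) as a function of her information; payoff $a_i(\mathbf 1[\theta=g\text{ and both adopt}]-c)$; equilibria are Bayesian Nash equilibria. *)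

theory Defs
  imports Complex_Main
begin

(* Generic finite Bayesian game: outcomes 'w with probability weights P,
   G w = (state is g), Si / Sj = signals of agent i and of the other agent j.
   A (mixed) strategy maps a signal to the probability of adopting. *)

definition is_strategy :: "('s \<Rightarrow> real) \<Rightarrow> bool" where
  "is_strategy a \<longleftrightarrow> (\<forall>s. 0 \<le> a s \<and> a s \<le> 1)"

definition eu :: "('w::finite \<Rightarrow> real) \<Rightarrow> ('w \<Rightarrow> bool) \<Rightarrow> ('w \<Rightarrow> 's) \<Rightarrow> ('w \<Rightarrow> 't)
                  \<Rightarrow> real \<Rightarrow> ('s \<Rightarrow> real) \<Rightarrow> ('t \<Rightarrow> real) \<Rightarrow> real" where
  "eu P G Si Sj c ai aj =
     (\<Sum>w\<in>UNIV. P w * ai (Si w) * ((if G w then aj (Sj w) else 0) - c))"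

definition is_BNE :: "('w::finite \<Rightarrow> real) \<Rightarrow> ('w \<Rightarrow> bool) \<Rightarrow> ('w \<Rightarrow> 's) \<Rightarrow> ('w \<Rightarrow> 't)
                  \<Rightarrow> real \<Rightarrow> ('s \<Rightarrow> real) \<Rightarrow> ('t \<Rightarrow> real) \<Rightarrow> bool" where
  "is_BNE P G S1 S2 c a1 a2 \<longleftrightarrow>
     is_strategy a1 \<and> is_strategy a2 \<and>
     (\<forall>b. is_strategy b \<longrightarrow> eu P G S1 S2 c b a2 \<le> eu P G S1 S2 c a1 a2) \<and>
     (\<forall>b. is_strategy b \<longrightarrow> eu P G S2 S1 c b a1 \<le> eu P G S2 S1 c a2 a1)"

definition both_adopt :: "('w::finite \<Rightarrow> real) \<Rightarrow> ('w \<Rightarrow> 's) \<Rightarrow> ('w \<Rightarrow> 't)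
                  \<Rightarrow> ('s \<Rightarrow> real) \<Rightarrow> ('t \<Rightarrow> real) \<Rightarrow> real" where
  "both_adopt P S1 S2 a1 a2 = (\<Sum>w\<in>UNIV. P w * a1 (S1 w) * a2 (S2 w))"

(* probability that a transmission is delivered (True) or lost (False) *)
definition deliv :: "real \<Rightarrow> bool \<Rightarrow> real" where
  "deliv \<epsilon> x = (if x then 1 - \<epsilon> else \<epsilon>)"

definition prior :: "real \<Rightarrow> bool \<Rightarrow> real" where
  "prior \<rho> g = (if g then \<rho> else 1 - \<rho>)"

(* Single seed. Outcome (g, x, y): g = state is good, x = planner->1 delivered,
   y = 1->2 delivered. Each agent observes whether she received a message. *)
definition P_one :: "real \<Rightarrow> real \<Rightarrow> bool \<times> bool \<times> bool \<Rightarrow> real" where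
  "P_one \<rho> \<epsilon> = (\<lambda>(g, x, y). prior \<rho> g * deliv \<epsilon> x * deliv \<epsilon> y)"

definition G_one :: "bool \<times> bool \<times> bool \<Rightarrow> bool" where
  "G_one = (\<lambda>(g, x, y). g)"

definition S1_one :: "bool \<times> bool \<times> bool \<Rightarrow> bool" where
  "S1_one = (\<lambda>(g, x, y). g \<and> x)"

definition S2_one :: "bool \<times> bool \<times> bool \<Rightarrow> bool" where
  "S2_one = (\<lambda>(g, x, y). g \<and> x \<and> y)"

(* Outcome (g, p1, p2, f12, f21): p_i = planner->i delivered,
   f12 = 1->2 forward delivered (only sent if p1), f21 = 2->1 forward delivered
   (only sent if p2). Signal of an agent = (received from planner, received from other). *)
type_synonym out2 = "bool \<times> bool \<times> bool \<times> bool \<times> bool"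

definition P_two :: "real \<Rightarrow> real \<Rightarrow> out2 \<Rightarrow> real" where
  "P_two \<rho> \<epsilon> = (\<lambda>(g, p1, p2, f12, f21).
      prior \<rho> g * deliv \<epsilon> p1 * deliv \<epsilon> p2 * deliv \<epsilon> f12 * deliv \<epsilon> f21)"

definition G_two :: "out2 \<Rightarrow> bool" where
  "G_two = (\<lambda>(g, p1, p2, f12, f21). g)"

definition S1_two :: "out2 \<Rightarrow> bool \<times> bool" where
  "S1_two = (\<lambda>(g, p1, p2, f12, f21). (g \<and> p1, g \<and> p2 \<and> f21))"

definition S2_two :: "out2 \<Rightarrow> bool \<times> bool" where
  "S2_two = (\<lambda>(g, p1, p2, f12, f21). (g \<and> p2, g \<and> p1 \<and> f12))"

end

theory Submission
  imports Defs
begin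
lemma sum3: "(\<Sum>w\<in>(UNIV::(bool\<times>bool\<times>bool) set). f w) = (\<Sum>g\<in>UNIV. \<Sum>x\<in>UNIV. \<Sum>y\<in>UNIV. f (g,x,y))"
  by (simp add: UNIV_Times_UNIV[symmetric] sum.cartesian_product split_def del: UNIV_Times_UNIV)
lemma sum5: "(\<Sum>w\<in>(UNIV::out2 set). f w) = (\<Sum>g\<in>UNIV. \<Sum>p1\<in>UNIV. \<Sum>p2\<in>UNIV. \<Sum>a\<in>UNIV. \<Sum>b\<in>UNIV. f (g,p1,p2,a,b))"
  by (simp add: UNIV_Times_UNIV[symmetric] sum.cartesian_product split_def del: UNIV_Times_UNIV)

lemma dev_zero:
  fixes P :: "'w::finite \<Rightarrow> real"
  assumes x: "is_strategy x"
    and br: "\<forall>b. is_strategy b \<longrightarrow> eu P G Sa Sb c b y \<le> eu P G Sa Sb c x y"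
    and D: "(\<Sum>w\<in>UNIV. if Sa w = s then P w * ((if G w then y (Sb w) else 0) - c) else 0) < 0"
  shows "x s = 0"
proof -
  define D where "D = (\<Sum>w\<in>UNIV. if Sa w = s then P w * ((if G w then y (Sb w) else 0) - c) else 0)"
  define b where "b = x(s := 0)"
  have sb: "is_strategy b" using x unfolding b_def is_strategy_def by auto
  have "eu P G Sa Sb c b y - eu P G Sa Sb c x y =
        (\<Sum>w\<in>UNIV. P w * b (Sa w) * ((if G w then y (Sb w) else 0) - c) - P w * x (Sa w) * ((if G w then y (Sb w) else 0) - c))"
    unfolding eu_def by (simp add: sum_subtractf)
  also have "\<dots> = (\<Sum>w\<in>UNIV. - x s * (if Sa w = s then P w * ((if G w then y (Sb w) else 0) - c) else 0))"
    by (rule sum.cong) (auto simp: b_def)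
  also have "\<dots> = - x s * D" unfolding D_def by (simp add: sum_distrib_left)
  finally have "- x s * D \<le> 0" using br sb by auto
  moreover have "D < 0" using D D_def by simp
  moreover have "x s \<ge> 0" using x unfolding is_strategy_def by auto
  ultimately have "x s \<le> 0"
  proof -
    assume h: "- x s * D \<le> 0" "D < 0" "x s \<ge> 0"
    show ?thesis
    proof (rule ccontr)
      assume "\<not> x s \<le> 0"
      hence "x s * D < 0" using h(2) by (simp add: mult_pos_neg)
      thus False using h(1) by linarith
    qed
  qed
  then show ?thesis using \<open>x s \<ge> 0\<close> by simp
qed

lemma D_bound:
  fixes P :: "'w::finite \<Rightarrow> real"
  assumes "\<forall>w. P w \<ge> 0" "is_strategy y"
  shows "(\<Sum>w\<in>UNIV. if Sa w = s then P w * ((if G w then y (Sb w) else 0) - c) else 0)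
     \<le> (\<Sum>w\<in>UNIV. if Sa w = s then P w * ((if G w then 1 else 0) - c) else 0)"
  apply (rule sum_mono)
  using assms unfolding is_strategy_def by (auto intro: mult_left_mono)

lemma P_two_nonneg: "0 < \<rho> \<Longrightarrow> \<rho> < 1 \<Longrightarrow> 0 < \<epsilon> \<Longrightarrow> \<epsilon> < 1 \<Longrightarrow> P_two \<rho> \<epsilon> w \<ge> 0"
  by (cases w) (auto simp: P_two_def prior_def deliv_def)

lemma D1_two: "(\<Sum>w\<in>UNIV. (if S1_two w = (False,False) then P_two \<rho> \<epsilon> w * ((if G_two w then 1 else 0) - c) else 0)) = \<rho>*\<epsilon>^2*(2-\<epsilon>) - c*(1-\<rho>+\<rho>*\<epsilon>^2*(2-\<epsilon>))"
  apply (simp add: sum5 UNIV_bool S1_two_def P_two_def G_two_def prior_def deliv_def)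
  apply (simp add: algebra_simps power2_eq_square)
  done
lemma D2_two: "(\<Sum>w\<in>UNIV. (if S2_two w = (False,False) then P_two \<rho> \<epsilon> w * ((if G_two w then 1 else 0) - c) else 0)) = \<rho>*\<epsilon>^2*(2-\<epsilon>) - c*(1-\<rho>+\<rho>*\<epsilon>^2*(2-\<epsilon>))"
  apply (simp add: sum5 UNIV_bool S2_two_def P_two_def G_two_def prior_def deliv_def)
  apply (simp add: algebra_simps power2_eq_square)
  done
lemma rest_two: "(\<Sum>w\<in>UNIV. (if S1_two w = (False,False) then 0 else P_two \<rho> \<epsilon> w)) = \<rho>*(1-\<epsilon>^2*(2-\<epsilon>))"
  apply (simp add: sum5 UNIV_bool S1_two_def P_two_def G_two_def prior_def deliv_def)
  apply (simp add: algebra_simps power2_eq_square)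
  done
lemma tot_one: "both_adopt (P_one \<rho> \<epsilon>) S1_one S2_one (\<lambda>_. 1) (\<lambda>_. 1) = 1"
  unfolding both_adopt_def
  apply (simp add: sum3 UNIV_bool P_one_def prior_def deliv_def)
  apply (simp add: algebra_simps)
  done
lemma eu1_one: "eu (P_one \<rho> \<epsilon>) G_one S1_one S2_one c b (\<lambda>_. 1) = b True * (\<rho>*(1-\<epsilon>)*(1-c)) + b False * (\<rho>*\<epsilon> - c*(1-\<rho>+\<rho>*\<epsilon>))"
  unfolding eu_def
  apply (simp add: sum3 UNIV_bool P_one_def G_one_def S1_one_def S2_one_def prior_def deliv_def)
  apply (simp add: algebra_simps)
  done
lemma eu2_one: "eu (P_one \<rho> \<epsilon>) G_one S2_one S1_one c b (\<lambda>_. 1) = b True * (\<rho>*(1-\<epsilon>)^2*(1-c)) + b False * (\<rho>*\<epsilon>*(2-\<epsilon>) - c*(1-\<rho>+\<rho>*\<epsilon>*(2-\<epsilon>)))"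
  unfolding eu_def
  apply (simp add: sum3 UNIV_bool P_one_def G_one_def S1_one_def S2_one_def prior_def deliv_def)
  apply (simp add: algebra_simps power2_eq_square)
  done
theorem mainTheorem11:
  fixes \<rho> :: real
  assumes "0 < \<rho>" and "\<rho> < 1"
  shows "\<exists>\<epsilon>0>0. \<forall>\<epsilon>::real. 0 < \<epsilon> \<and> \<epsilon> < 1 \<and> \<epsilon> < \<epsilon>0 \<longrightarrow>
           (\<exists>lo hi::real. 0 \<le> lo \<and> lo < hi \<and> hi \<le> 1 \<and>
              (\<forall>c. lo < c \<and> c < hi \<longrightarrow>
                 (\<exists>a1 a2. is_BNE (P_one \<rho> \<epsilon>) G_one S1_one S2_one c a1 a2 \<and>
                    (\<forall>b1 b2. is_BNE (P_two \<rho> \<epsilon>) G_two S1_two S2_two c b1 b2 \<longrightarrow>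
                       both_adopt (P_two \<rho> \<epsilon>) S1_two S2_two b1 b2
                         < both_adopt (P_one \<rho> \<epsilon>) S1_one S2_one a1 a2))))"
proof (rule exI[of _ 1], intro conjI allI impI)
  show "(0::real) < 1" by simp
  fix \<epsilon> :: real
  assume e: "0 < \<epsilon> \<and> \<epsilon> < 1 \<and> \<epsilon> < 1"
  hence e0: "0 < \<epsilon>" and e1: "\<epsilon> < 1" by auto
  define K where "K = 1 - \<rho>"
  have K: "K > 0" using assms K_def by simp
  define t where "t = \<rho>*\<epsilon>^2*(2-\<epsilon>)"
  define v where "v = \<rho>*\<epsilon>"
  have t0: "t > 0" using assms e0 e1 t_def by simp
  have tv: "t < v"
  proof -
    have sq: "(1-\<epsilon>)^2 > 0" using e1 by simp
    have "\<epsilon> * (2 - \<epsilon>) = 1 - (1-\<epsilon>)^2" by (simp add: power2_eq_square algebra_simps)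
    hence "\<epsilon> * (2 - \<epsilon>) < 1" using sq by linarith
    hence "\<epsilon> * (\<epsilon> * (2 - \<epsilon>)) < \<epsilon> * 1" using e0 by (rule mult_strict_left_mono)
    hence "\<epsilon>^2*(2-\<epsilon>) < \<epsilon>" by (simp add: power2_eq_square mult.assoc)
    thus ?thesis using assms t_def v_def by simp
  qed
  show "\<exists>lo hi::real. 0 \<le> lo \<and> lo < hi \<and> hi \<le> 1 \<and>
              (\<forall>c. lo < c \<and> c < hi \<longrightarrow>
                 (\<exists>a1 a2. is_BNE (P_one \<rho> \<epsilon>) G_one S1_one S2_one c a1 a2 \<and>
                    (\<forall>b1 b2. is_BNE (P_two \<rho> \<epsilon>) G_two S1_two S2_two c b1 b2 \<longrightarrow>
                       both_adopt (P_two \<rho> \<epsilon>) S1_two S2_two b1 b2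
                         < both_adopt (P_one \<rho> \<epsilon>) S1_one S2_one a1 a2)))"
  proof (rule exI[of _ "t/(K+t)"], rule exI[of _ "v/(K+v)"], intro conjI allI impI)
    show "0 \<le> t/(K+t)" using t0 K by simp
    have "t*K < v*K" using tv K by simp
    hence "t*(K+v) < v*(K+t)" by (simp add: algebra_simps)
    thus "t/(K+t) < v/(K+v)" using t0 K tv by (simp add: divide_simps)
    show "v/(K+v) \<le> 1" using t0 tv K by simp
    fix c assume c: "t / (K + t) < c \<and> c < v / (K + v)"
    have clo: "c*(K+t) > t" using c t0 K by (simp add: divide_simps)
    have chi: "c*(K+v) < v" using c t0 tv K by (simp add: divide_simps)
    have c1: "c < 1"
    proof (rule ccontr)
      assume "\<not> c < 1"
      hence "1*(K+v) \<le> c*(K+v)" using K t0 tv by (intro mult_right_mono) auto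
      thus False using chi K unfolding mult_1 by linarith
    qed
    have "c*(K+t) > 0" using clo t0 by linarith
    hence cpos: "c > 0" using K t0 by (simp add: zero_less_mult_iff)
    have strat1: "is_strategy (\<lambda>_::bool. 1::real)" by (simp add: is_strategy_def)
    show "\<exists>a1 a2. is_BNE (P_one \<rho> \<epsilon>) G_one S1_one S2_one c a1 a2 \<and>
                    (\<forall>b1 b2. is_BNE (P_two \<rho> \<epsilon>) G_two S1_two S2_two c b1 b2 \<longrightarrow>
                       both_adopt (P_two \<rho> \<epsilon>) S1_two S2_two b1 b2
                         < both_adopt (P_one \<rho> \<epsilon>) S1_one S2_one a1 a2)"
    proof (intro exI[of _ "\<lambda>_. 1"] conjI allI impI)
      have A1: "\<rho>*(1-\<epsilon>)*(1-c) \<ge> 0" using assms e1 c1 by simp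
      have B1: "\<rho>*\<epsilon> - c*(1-\<rho>+\<rho>*\<epsilon>) \<ge> 0" using chi v_def K_def by simp
      have A2: "\<rho>*(1-\<epsilon>)^2*(1-c) \<ge> 0" using assms e1 c1 by simp
      have B2: "\<rho>*\<epsilon>*(2-\<epsilon>) - c*(1-\<rho>+\<rho>*\<epsilon>*(2-\<epsilon>)) \<ge> 0"
      proof -
        have "\<rho>*\<epsilon>*(2-\<epsilon>) - c*(1-\<rho>+\<rho>*\<epsilon>*(2-\<epsilon>)) = (\<rho>*\<epsilon> - c*(1-\<rho>+\<rho>*\<epsilon>)) + (\<rho>*\<epsilon>*(1-\<epsilon>))*(1-c)"
          by (simp add: algebra_simps)
        moreover have "(\<rho>*\<epsilon>*(1-\<epsilon>))*(1-c) \<ge> 0" using assms e0 e1 c1 by simp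
        ultimately show ?thesis using B1 by linarith
      qed
      have key: "\<And>(b::bool\<Rightarrow>real) A B. is_strategy b \<Longrightarrow> A \<ge> 0 \<Longrightarrow> B \<ge> 0 \<Longrightarrow> b True * A + b False * B \<le> 1 * A + 1 * B"
      proof -
        fix b :: "bool \<Rightarrow> real" and A B :: real
        assume "is_strategy b" "A \<ge> 0" "B \<ge> 0"
        moreover have "b True \<le> 1" "b False \<le> 1" using \<open>is_strategy b\<close> by (auto simp: is_strategy_def)
        ultimately show "b True * A + b False * B \<le> 1 * A + 1 * B"
          by (intro add_mono mult_right_mono) auto
      qed
      show "is_BNE (P_one \<rho> \<epsilon>) G_one S1_one S2_one c (\<lambda>_. 1) (\<lambda>_. 1)"
        unfolding is_BNE_def using strat1 key[OF _ A1 B1] key[OF _ A2 B2]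
        by (simp add: eu1_one eu2_one del: mult_1)
      fix b1 b2 assume bne: "is_BNE (P_two \<rho> \<epsilon>) G_two S1_two S2_two c b1 b2"
      have Pn: "\<forall>w. P_two \<rho> \<epsilon> w \<ge> 0" using P_two_nonneg assms e0 e1 by blast
      have s1: "is_strategy b1" and s2: "is_strategy b2" using bne by (auto simp: is_BNE_def)
      have neg: "\<rho>*\<epsilon>^2*(2-\<epsilon>) - c*(1-\<rho>+\<rho>*\<epsilon>^2*(2-\<epsilon>)) < 0" using clo t_def K_def by simp
      have z1: "b1 (False,False) = 0"
        apply (rule dev_zero[where P="P_two \<rho> \<epsilon>" and G=G_two and Sa=S1_two and Sb=S2_two and c=c and y=b2])
        using s1 bne apply (auto simp: is_BNE_def)[2]
        using D_bound[OF Pn s2, of S1_two "(False,False)" G_two S2_two c] D1_two[of \<rho> \<epsilon> c] neg by linarith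
      have "both_adopt (P_two \<rho> \<epsilon>) S1_two S2_two b1 b2 \<le> (\<Sum>w\<in>UNIV. (if S1_two w = (False,False) then 0 else P_two \<rho> \<epsilon> w))"
        unfolding both_adopt_def
      proof (rule sum_mono)
        fix w
        have "b1 (S1_two w) \<le> 1" "b2 (S2_two w) \<le> 1" "b1 (S1_two w) \<ge> 0" "b2 (S2_two w) \<ge> 0"
          using s1 s2 unfolding is_strategy_def by blast+
        hence prod: "b1 (S1_two w) * b2 (S2_two w) \<le> 1" by (simp add: mult_le_one)
        show "P_two \<rho> \<epsilon> w * b1 (S1_two w) * b2 (S2_two w) \<le> (if S1_two w = (False,False) then 0 else P_two \<rho> \<epsilon> w)"
        proof -
          have Pw: "P_two \<rho> \<epsilon> w \<ge> 0" using Pn by blast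
          have "P_two \<rho> \<epsilon> w * (b1 (S1_two w) * b2 (S2_two w)) \<le> P_two \<rho> \<epsilon> w * 1"
            using mult_left_mono[OF \<open>b1 (S1_two w) * b2 (S2_two w) \<le> 1\<close> Pw] .
          thus ?thesis using z1 by (auto simp: mult.assoc)
        qed
      qed
      also have "\<dots> = \<rho>*(1-\<epsilon>^2*(2-\<epsilon>))" by (rule rest_two)
      also have "\<dots> = \<rho> - t" by (simp add: t_def algebra_simps)
      also have "\<dots> < 1" using assms t0 by linarith
      finally show "both_adopt (P_two \<rho> \<epsilon>) S1_two S2_two b1 b2 < both_adopt (P_one \<rho> \<epsilon>) S1_one S2_one (\<lambda>_. 1) (\<lambda>_. 1)"
        by (simp add: tot_one)
    qed
  qed
qed
end
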